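(* Let $E$ be a topological vector space with a fundamental sequence of bounded sets. If $E$ has property (PS), then $E$ has countable $cs^\ast$-character.
   Context: A fundamental sequence of bounded sets is a sequence $(B_n)$ of bounded sets such that every bounded set lies in some $B_n$. A topological (additive) group has property (PS) if for every sequence $(g_n)$ converging to $0$ there are strictly increasing sequences $(m_k),(n_k)$ of natural numbers with $m_kg_{n_k}\to0$. A family $\mathcal{N}$ of subsets of $X$ is a $cs^\ast$-network at $x$ if for each sequence $(x_n)$ converging to $x$ and each neighborhood $O_x$ of $x$ there is $N\in\mathcal{N}$ with $x\in N\subseteq O_x$ and $\{n:x_n\in N\}$ infinite; the $cs^\ast$-character of $X$ is the supremum over $x\in X$ of the least cardinality of a $cs^\ast$-network at $x$. *)

theory Defs
  imports "HOL-Analysis.Analysis"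
begin

text \<open>A real topological vector space: a real vector space whose topology makes addition
  and negation continuous (class topological_ab_group_add) and in which scalar
  multiplication is jointly continuous.\<close>
definition tvs_scalar_continuous :: "('a::{real_vector, topological_space}) itself \<Rightarrow> bool" where
  "tvs_scalar_continuous _ \<longleftrightarrow>
     continuous_on (UNIV :: (real \<times> 'a) set) (\<lambda>p. fst p *\<^sub>R snd p)"

definition tvs_bounded :: "'a::{real_vector, topological_space} set \<Rightarrow> bool" where
  "tvs_bounded B \<longleftrightarrow>
     (\<forall>U. open U \<and> 0 \<in> U \<longrightarrow> (\<exists>t>0. \<forall>s::real. s \<ge> t \<longrightarrow> B \<subseteq> (\<lambda>x. s *\<^sub>R x) ` U))"

definition has_fundamental_bounded_sequence :: "('a::{real_vector, topological_space}) itself \<Rightarrow> bool" where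
  "has_fundamental_bounded_sequence _ \<longleftrightarrow>
     (\<exists>Bs :: nat \<Rightarrow> 'a set. (\<forall>n. tvs_bounded (Bs n)) \<and>
        (\<forall>B. tvs_bounded B \<longrightarrow> (\<exists>n. B \<subseteq> Bs n)))"

definition property_PS :: "('a::{real_vector, topological_space}) itself \<Rightarrow> bool" where
  "property_PS _ \<longleftrightarrow>
     (\<forall>g :: nat \<Rightarrow> 'a. g \<longlonglongrightarrow> 0 \<longrightarrow>
        (\<exists>m n :: nat \<Rightarrow> nat. strict_mono m \<and> strict_mono n \<and>
           (\<lambda>k. real (m k) *\<^sub>R g (n k)) \<longlonglongrightarrow> 0))"

definition cs_star_network_at :: "'a::topological_space \<Rightarrow> 'a set set \<Rightarrow> bool" where
  "cs_star_network_at x N \<longleftrightarrow>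
     (\<forall>(s :: nat \<Rightarrow> 'a) V. s \<longlonglongrightarrow> x \<and> open V \<and> x \<in> V \<longrightarrow>
        (\<exists>A\<in>N. x \<in> A \<and> A \<subseteq> V \<and> infinite {n. s n \<in> A}))"

definition countable_cs_star_character :: "('a::topological_space) itself \<Rightarrow> bool" where
  "countable_cs_star_character _ \<longleftrightarrow>
     (\<forall>x :: 'a. \<exists>N. countable N \<and> cs_star_network_at x N)"

end

theory Submission
  imports Defs
begin

lemma cont_ev:
  assumes "continuous_on UNIV f" "open U" "f a \<in> U"
  shows "eventually (\<lambda>x. f x \<in> U) (nhds a)"
proof -
  have "open (f -` U)" using assms continuous_on_open_vimage[of UNIV f] by simp
  then show ?thesis unfolding eventually_nhds using assms by blast
qed

lemma conv_bounded:
  fixes c :: "nat \<Rightarrow> 'a::{real_vector, topological_ab_group_add}"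
  assumes sc: "tvs_scalar_continuous TYPE('a)" and lim: "c \<longlonglongrightarrow> 0"
  shows "tvs_bounded (range c)"
  unfolding tvs_bounded_def
proof (intro allI impI)
  fix U :: "'a set" assume U: "open U \<and> 0 \<in> U"
  have cont: "continuous_on UNIV (\<lambda>p::real\<times>'a. fst p *\<^sub>R snd p)"
    using sc unfolding tvs_scalar_continuous_def by simp
  have "eventually (\<lambda>p::real\<times>'a. fst p *\<^sub>R snd p \<in> U) (nhds (0,0))"
    using cont_ev[OF cont] U by simp
  then have "eventually (\<lambda>p::real\<times>'a. fst p *\<^sub>R snd p \<in> U) (nhds 0 \<times>\<^sub>F nhds 0)"
    by (simp add: nhds_prod)
  then obtain P Q where P: "eventually P (nhds (0::real))" and Q: "eventually Q (nhds (0::'a))"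
    and PQ: "\<And>r y. P r \<Longrightarrow> Q y \<Longrightarrow> r *\<^sub>R y \<in> U"
    unfolding eventually_prod_filter by auto
  have "eventually (\<lambda>k. Q (c k)) sequentially"
    by (rule eventually_compose_filterlim[OF Q lim])
  then obtain K where K: "\<And>k. k \<ge> K \<Longrightarrow> Q (c k)" by (auto simp: eventually_sequentially)
  have ev1: "eventually (\<lambda>r::real. r *\<^sub>R c k \<in> U) (nhds 0)" for k
  proof -
    have "continuous_on UNIV (\<lambda>r::real. (r, c k))"
      by (intro continuous_intros)
    then have "continuous_on UNIV (\<lambda>r::real. fst (r, c k) *\<^sub>R snd (r, c k))"
      using continuous_on_compose2[OF cont] by blast
    then show ?thesis using cont_ev[of "\<lambda>r::real. fst (r, c k) *\<^sub>R snd (r, c k)" U 0] U by simp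
  qed
  have "eventually (\<lambda>r::real. \<forall>k\<in>{..<K}. r *\<^sub>R c k \<in> U) (nhds 0)"
    using ev1 by (intro eventually_ball_finite) auto
  then have "eventually (\<lambda>r::real. (\<forall>k\<in>{..<K}. r *\<^sub>R c k \<in> U) \<and> P r) (nhds 0)"
    using P by (rule eventually_conj)
  then obtain d where d: "d > 0" and dP: "\<And>r::real. dist r 0 < d \<Longrightarrow> (\<forall>k\<in>{..<K}. r *\<^sub>R c k \<in> U) \<and> P r"
    unfolding eventually_nhds_metric by blast
  have all: "\<forall>k. r *\<^sub>R c k \<in> U" if "\<bar>r\<bar> < d" for r
  proof
    fix k
    show "r *\<^sub>R c k \<in> U"
    proof (cases "k < K")
      case True then show ?thesis using dP[of r] that by auto
    next
      case False then show ?thesis using dP[of r] that K[of k] PQ by auto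
    qed
  qed
  show "\<exists>t>0. \<forall>s::real. s \<ge> t \<longrightarrow> range c \<subseteq> (\<lambda>x. s *\<^sub>R x) ` U"
  proof (intro exI[of _ "2/d"] conjI allI impI)
    show "2/d > 0" using d by simp
    fix s :: real assume s: "s \<ge> 2/d"
    have spos: "s > 0" using s d by (smt (verit) divide_pos_pos)
    have "\<bar>1/s\<bar> < d"
    proof -
      have "1/s \<le> d/2" using s d spos by (simp add: field_simps)
      then show ?thesis using spos d by simp
    qed
    show "range c \<subseteq> (\<lambda>x. s *\<^sub>R x) ` U"
    proof
      fix y assume "y \<in> range c"
      then obtain k where y: "y = c k" by auto
      have "(1/s) *\<^sub>R c k \<in> U" using all[OF \<open>\<bar>1/s\<bar> < d\<close>] by auto
      moreover have "y = s *\<^sub>R ((1/s) *\<^sub>R c k)" using spos y by simp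
      ultimately show "y \<in> (\<lambda>x. s *\<^sub>R x) ` U" by blast
    qed
  qed
qed


theorem mainTheorem13:
  assumes "tvs_scalar_continuous TYPE('a::{real_vector, topological_ab_group_add})"
    and "has_fundamental_bounded_sequence TYPE('a)"
    and "property_PS TYPE('a)"
  shows "countable_cs_star_character TYPE('a)"
  unfolding countable_cs_star_character_def
proof
  fix x :: 'a
  obtain Bs :: "nat \<Rightarrow> 'a set" where Bsb: "\<And>n. tvs_bounded (Bs n)"
    and Bsf: "\<And>B. tvs_bounded B \<Longrightarrow> \<exists>n. B \<subseteq> Bs n"
    using assms(2) unfolding has_fundamental_bounded_sequence_def by blast
  define A where "A = (\<lambda>(m::nat, n::nat). insert 0 (\<Union>j\<in>{m..}. (\<lambda>y. (1 / real j) *\<^sub>R y) ` Bs n))"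
  define N where "N = (\<lambda>p. (\<lambda>y. x + y) ` A p) ` UNIV"
  have "countable N" unfolding N_def by simp
  moreover have "cs_star_network_at x N"
    unfolding cs_star_network_at_def
  proof (intro allI impI)
    fix s :: "nat \<Rightarrow> 'a" and V
    assume sV: "s \<longlonglongrightarrow> x \<and> open V \<and> x \<in> V"
    define g where "g k = s k - x" for k
    have g: "g \<longlonglongrightarrow> 0" unfolding g_def using sV tendsto_diff[of s x sequentially "\<lambda>_. x" x] by simp
    define U where "U = (\<lambda>y. x + y) -` V"
    have "continuous_on UNIV (\<lambda>y::'a. x + y)" by (intro continuous_intros)
    then have oU: "open U" unfolding U_def using sV continuous_on_open_vimage[of UNIV "\<lambda>y. x + y"] by simp
    have U0: "0 \<in> U" unfolding U_def using sV by simp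
    obtain m n :: "nat \<Rightarrow> nat" where m: "strict_mono m" and n: "strict_mono n"
      and mn: "(\<lambda>k. real (m k) *\<^sub>R g (n k)) \<longlonglongrightarrow> 0"
      using assms(3) g unfolding property_PS_def by blast
    define c where "c k = real (m k) *\<^sub>R g (n k)" for k
    have "tvs_bounded (range c)" using conv_bounded[OF assms(1)] mn unfolding c_def by blast
    then obtain NN where NN: "range c \<subseteq> Bs NN" using Bsf by blast
    obtain t where t: "t > 0" and tB: "\<And>r::real. r \<ge> t \<Longrightarrow> Bs NN \<subseteq> (\<lambda>y. r *\<^sub>R y) ` U"
      using Bsb[of NN] oU U0 unfolding tvs_bounded_def by blast
    define M where "M = nat \<lceil>t\<rceil> + 1"
    have Mt: "real M \<ge> t" unfolding M_def by linarith
    have M1: "M \<ge> 1" unfolding M_def by simp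
    have AU: "A (M, NN) \<subseteq> U"
    proof
      fix z assume "z \<in> A (M, NN)"
      then consider "z = 0" | j y where "j \<ge> M" "y \<in> Bs NN" "z = (1 / real j) *\<^sub>R y"
        unfolding A_def by auto
      then show "z \<in> U"
      proof cases
        case 1 then show ?thesis using U0 by simp
      next
        case 2
        have jt: "real j \<ge> t" using 2(1) Mt by linarith
        have jp: "real j > 0" using 2(1) M1 by simp
        obtain u where u: "u \<in> U" "y = real j *\<^sub>R u" using tB[OF jt] 2(2) by blast
        have "z = u" using 2(3) u(2) jp by simp
        then show ?thesis using u by simp
      qed
    qed
    have inA: "g (n k) \<in> A (M, NN)" if "k \<ge> M" for k
    proof -
      have mk: "m k \<ge> M" using seq_suble[OF m, of k] that by simp
      have mp: "real (m k) > 0" using mk M1 by simp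
      have "c k \<in> Bs NN" using NN by blast
      moreover have "g (n k) = (1 / real (m k)) *\<^sub>R c k" unfolding c_def using mp by simp
      ultimately show ?thesis unfolding A_def using mk by auto
    qed
    show "\<exists>B\<in>N. x \<in> B \<and> B \<subseteq> V \<and> infinite {i. s i \<in> B}"
    proof (intro bexI[of _ "(\<lambda>y. x + y) ` A (M, NN)"] conjI)
      show "(\<lambda>y. x + y) ` A (M, NN) \<in> N" unfolding N_def by blast
      show "x \<in> (\<lambda>y. x + y) ` A (M, NN)" unfolding A_def by (auto intro: image_eqI[of _ _ 0])
      show "(\<lambda>y. x + y) ` A (M, NN) \<subseteq> V" using AU unfolding U_def by auto
      have sub: "n ` {M..} \<subseteq> {i. s i \<in> (\<lambda>y. x + y) ` A (M, NN)}"
      proof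
        fix i assume "i \<in> n ` {M..}"
        then obtain k where k: "k \<ge> M" "i = n k" by auto
        have "s i = x + g (n k)" unfolding g_def using k by simp
        then show "i \<in> {i. s i \<in> (\<lambda>y. x + y) ` A (M, NN)}" using inA[OF k(1)] by auto
      qed
      have "infinite (n ` {M..})"
        using strict_mono_imp_inj_on[OF n] finite_imageD infinite_Ici
        by (metis inj_on_subset subset_UNIV)
      then show "infinite {i. s i \<in> (\<lambda>y. x + y) ` A (M, NN)}" using sub finite_subset by blast
    qed
  qed
  ultimately show "\<exists>N. countable N \<and> cs_star_network_at x N" by blast
qed

end
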